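(* In the setting below (a differential calculus satisfying conditions (1)–(3), a pseudo-Riemannian bilinear metric $g$, and $\psi_{\omega,\theta}(\eta)$ defined as below), for all $\omega,\theta,\eta\in\mathcal{Z}(\mathcal{E})$ and $a'\in\mathcal{Z}(\mathcal{A})$, $$\psi_{\omega,\theta}(\eta a')=\psi_{\omega,\theta}(\eta)a'+2\,g(\omega\otimes_{\mathcal{A}}\eta)\,g(\theta\otimes_{\mathcal{A}}da').$$
   Context: $(\Omega(\mathcal{A}),d)$ is a differential calculus on a complex algebra $\mathcal{A}$ ($\Omega=\oplus_j\Omega^j$, $\Omega^0=\mathcal{A}$, bimodules $\Omega^j$, bimodule product $\wedge$ adding degrees, $d^2=0$, graded Leibniz rule, $\Omega^j$ right-spanned by $da_0\wedge\cdots\wedge da_{j-1}$), $\mathcal{E}=\Omega^1(\mathcal{A})$ a finitely generated projective right $\mathcal{A}$-module, $\wedge:\mathcal{E}\otimes_{\mathcal{A}}\mathcal{E}\to\Omega^2(\mathcal{A})$ the induced product, $\mathcal{Z}(\mathcal{M})=\{m:am=ma\ \forall a\in\mathcal{A}\}$. Conditions: (1) the multiplication map $\mathcal{Z}(\mathcal{E})\otimes_{\mathcal{Z}(\mathcal{A})}\mathcal{A}\to\mathcal{E}$ is an isomorphism; (2) $\mathcal{E}\otimes_{\mathcal{A}}\mathcal{E}=\ker(\wedge)\oplus\mathcal{F}$, $\mathcal{F}$ a right submodule with $Q=\wedge|_{\mathcal{F}}$ a right module isomorphism onto $\Omega^2(\mathcal{A})$; with $P_{\rm sym}$ the idempotent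 with image $\ker\wedge$ and kernel $\mathcal{F}$ and $\sigma=2P_{\rm sym}-1$, (3) $\sigma(\omega\otimes_{\mathcal{A}}\eta)=\eta\otimes_{\mathcal{A}}\omega$ for $\omega,\eta\in\mathcal{Z}(\mathcal{E})$. With an idempotent $p\in M_n(\mathcal{A})$, $p(\mathcal{A}^n)=\mathcal{E}$, $\Phi_j=p(e_j)$, $\nabla^{Gr}(\sum_j\Phi_ja_j)=\sum_j\Phi_j\otimes_{\mathcal{A}}da_j$ and $\nabla_0:=\nabla^{Gr}-Q^{-1}\circ(\wedge\circ\nabla^{Gr}+d)$. $g$ is an $\mathcal{A}$-bimodule map $\mathcal{E}\otimes_{\mathcal{A}}\mathcal{E}\to\mathcal{A}$ with $g\circ\sigma=g$ and $e\mapsto g(e\otimes_{\mathcal{A}}-)$ a right module isomorphism $\mathcal{E}\to\mathrm{Hom}_{\mathcal{A}}(\mathcal{E},\mathcal{A})$. For $\alpha,\beta\in\mathcal{E}$ let $G_{\alpha,\beta}(x\otimes_{\mathcal{A}}y)=g(\alpha\otimes_{\mathcal{A}}x)g(\beta\otimes_{\mathcal{A}}y)$. For $\omega,\eta,\theta\in\mathcal{Z}(\mathcal{E})$: $\psi_{\omega,\theta}(\eta)=g(\omega\otimes_{\mathcal{A}}dg(\eta\otimes_{\mathcal{A}}\theta))-g(\eta\otimes_{\mathcal{A}}dg(\theta\otimes_{\mathcal{A}}\omega))+g(\theta\otimes_{\mathcal{A}}dg(\omega\otimes_{\mathcal{A}}\eta))-G_{\eta,\theta}((1-\sigma)\nabla_0(\omega))+G_{\omega,\theta}((1-\sigma)\nabla_0(\eta))-G_{\eta,\omega}((1-\sigma)\nabla_0(\theta))$.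 *)

theory Defs
  imports Complex_Main
begin

definition zmult :: "int \<Rightarrow> 'g::ab_group_add \<Rightarrow> 'g" where
  "zmult k x = (if 0 \<le> k then sum_list (replicate (nat k) x)
                else - sum_list (replicate (nat (- k)) x))"

definition fsupp :: "('b \<Rightarrow> int) \<Rightarrow> 'b set" where
  "fsupp f = {p. f p \<noteq> 0}"

definition fsum :: "('m \<Rightarrow> 'n \<Rightarrow> 't::ab_group_add) \<Rightarrow> ('m \<times> 'n \<Rightarrow> int) \<Rightarrow> 't" where
  "fsum tens f = (\<Sum>p\<in>fsupp f. zmult (f p) (tens (fst p) (snd p)))"

definition delta :: "'b \<Rightarrow> 'b \<Rightarrow> int" where
  "delta p = (\<lambda>q. if q = p then 1 else 0)"

text \<open>The subgroup of the free abelian group on M x N generated by the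
  defining relations of the balanced tensor product over R.\<close>
inductive_set tensor_rels ::
  "'m::ab_group_add set \<Rightarrow> 'n::ab_group_add set \<Rightarrow> 'r set \<Rightarrow> ('m \<Rightarrow> 'r \<Rightarrow> 'm)
    \<Rightarrow> ('r \<Rightarrow> 'n \<Rightarrow> 'n) \<Rightarrow> ('m \<times> 'n \<Rightarrow> int) set"
  for M N R ra la where
  zero: "(\<lambda>_. 0) \<in> tensor_rels M N R ra la"
| add: "f \<in> tensor_rels M N R ra la \<Longrightarrow> h \<in> tensor_rels M N R ra la
          \<Longrightarrow> (\<lambda>p. f p + h p) \<in> tensor_rels M N R ra la"
| neg: "f \<in> tensor_rels M N R ra la \<Longrightarrow> (\<lambda>p. - f p) \<in> tensor_rels M N R ra la"
| lin1: "x \<in> M \<Longrightarrow> x' \<in> M \<Longrightarrow> y \<in> N \<Longrightarrow>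
          (\<lambda>p. delta (x + x', y) p - delta (x, y) p - delta (x', y) p) \<in> tensor_rels M N R ra la"
| lin2: "x \<in> M \<Longrightarrow> y \<in> N \<Longrightarrow> y' \<in> N \<Longrightarrow>
          (\<lambda>p. delta (x, y + y') p - delta (x, y) p - delta (x, y') p) \<in> tensor_rels M N R ra la"
| bal: "x \<in> M \<Longrightarrow> r \<in> R \<Longrightarrow> y \<in> N \<Longrightarrow>
          (\<lambda>p. delta (ra x r, y) p - delta (x, la r y) p) \<in> tensor_rels M N R ra la"

text \<open>tens exhibits T (the whole type) as the tensor product M (x)_R N:
  the canonical map from the free abelian group on M x N modulo the balanced
  relations to T is well defined, surjective and injective.\<close>
definition is_tensor_product ::
  "'m::ab_group_add set \<Rightarrow> 'n::ab_group_add set \<Rightarrow> 'r set \<Rightarrow> ('m \<Rightarrow> 'r \<Rightarrow> 'm)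
    \<Rightarrow> ('r \<Rightarrow> 'n \<Rightarrow> 'n) \<Rightarrow> ('m \<Rightarrow> 'n \<Rightarrow> 't::ab_group_add) \<Rightarrow> bool" where
  "is_tensor_product M N R ra la tens \<longleftrightarrow>
     (\<forall>x\<in>M. \<forall>x'\<in>M. \<forall>y\<in>N. tens (x + x') y = tens x y + tens x' y) \<and>
     (\<forall>x\<in>M. \<forall>y\<in>N. \<forall>y'\<in>N. tens x (y + y') = tens x y + tens x y') \<and>
     (\<forall>x\<in>M. \<forall>r\<in>R. \<forall>y\<in>N. tens (ra x r) y = tens x (la r y)) \<and>
     (\<forall>t. \<exists>f. finite (fsupp f) \<and> fsupp f \<subseteq> M \<times> N \<and> fsum tens f = t) \<and>
     (\<forall>f. finite (fsupp f) \<and> fsupp f \<subseteq> M \<times> N \<and> fsum tens f = 0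
            \<longrightarrow> f \<in> tensor_rels M N R ra la)"

definition bimod :: "('a::ring_1 \<Rightarrow> 'm::ab_group_add \<Rightarrow> 'm) \<Rightarrow> ('m \<Rightarrow> 'a \<Rightarrow> 'm) \<Rightarrow> bool" where
  "bimod l r \<longleftrightarrow>
     (\<forall>a x y. l a (x + y) = l a x + l a y) \<and> (\<forall>a b x. l (a + b) x = l a x + l b x) \<and>
     (\<forall>a b x. l (a * b) x = l a (l b x)) \<and> (\<forall>x. l 1 x = x) \<and>
     (\<forall>a x y. r (x + y) a = r x a + r y a) \<and> (\<forall>a b x. r x (a + b) = r x a + r x b) \<and>
     (\<forall>a b x. r x (a * b) = r (r x a) b) \<and> (\<forall>x. r x 1 = x) \<and>
     (\<forall>a b x. l a (r x b) = r (l a x) b)"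

definition complex_alg :: "(complex \<Rightarrow> 'a::ring_1) \<Rightarrow> bool" where
  "complex_alg ofC \<longleftrightarrow> ofC 1 = 1 \<and> (\<forall>c d. ofC (c + d) = ofC c + ofC d) \<and>
     (\<forall>c d. ofC (c * d) = ofC c * ofC d) \<and> (\<forall>c a. ofC c * a = a * ofC c)"

definition centA :: "'a::ring_1 set" where
  "centA = {a. \<forall>b. a * b = b * a}"

definition centM :: "('a::ring_1 \<Rightarrow> 'm \<Rightarrow> 'm) \<Rightarrow> ('m \<Rightarrow> 'a \<Rightarrow> 'm) \<Rightarrow> 'm set" where
  "centM l r = {m. \<forall>a. l a m = r m a}"

text \<open>Omega^0 = A ('a), Omega^1 = E ('e), Omega^2 ('w); dA : A -> E, dE : E -> Omega^2,
  wed : E x E -> Omega^2 the bimodule product.\<close>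
definition diff_calc ::
  "(complex \<Rightarrow> 'a::ring_1) \<Rightarrow> ('a \<Rightarrow> 'e::ab_group_add \<Rightarrow> 'e) \<Rightarrow> ('e \<Rightarrow> 'a \<Rightarrow> 'e)
   \<Rightarrow> ('a \<Rightarrow> 'w::ab_group_add \<Rightarrow> 'w) \<Rightarrow> ('w \<Rightarrow> 'a \<Rightarrow> 'w)
   \<Rightarrow> ('a \<Rightarrow> 'e) \<Rightarrow> ('e \<Rightarrow> 'w) \<Rightarrow> ('e \<Rightarrow> 'e \<Rightarrow> 'w) \<Rightarrow> bool" where
  "diff_calc ofC lE rE lW rW dA dE wed \<longleftrightarrow>
     complex_alg ofC \<and> bimod lE rE \<and> bimod lW rW \<and>
     (\<forall>a b. dA (a + b) = dA a + dA b) \<and>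
     (\<forall>c a. dA (ofC c * a) = lE (ofC c) (dA a)) \<and>
     (\<forall>a b. dA (a * b) = rE (dA a) b + lE a (dA b)) \<and>
     (\<forall>x y. dE (x + y) = dE x + dE y) \<and>
     (\<forall>c x. dE (lE (ofC c) x) = lW (ofC c) (dE x)) \<and>
     (\<forall>a x. dE (lE a x) = wed (dA a) x + lW a (dE x)) \<and>
     (\<forall>a x. dE (rE x a) = rW (dE x) a - wed x (dA a)) \<and>
     (\<forall>a. dE (dA a) = 0) \<and>
     (\<forall>x x' y. wed (x + x') y = wed x y + wed x' y) \<and>
     (\<forall>x y y'. wed x (y + y') = wed x y + wed x y') \<and>
     (\<forall>a x y. lW a (wed x y) = wed (lE a x) y) \<and>
     (\<forall>a x y. wed (rE x a) y = wed x (lE a y)) \<and>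
     (\<forall>a x y. rW (wed x y) a = wed x (rE y a)) \<and>
     (\<forall>x. \<exists>xs::('a \<times> 'a) list. x = sum_list (map (\<lambda>(a, b). rE (dA a) b) xs)) \<and>
     (\<forall>w. \<exists>xs::('a \<times> 'a \<times> 'a) list.
            w = sum_list (map (\<lambda>(a0, a1, b). rW (wed (dA a0) (dA a1)) b) xs))"

text \<open>T ('t) with tens is E (x)_A E as an A-bimodule; wedT is the induced wedge map.\<close>
definition tensor_EE ::
  "('a::ring_1 \<Rightarrow> 'e::ab_group_add \<Rightarrow> 'e) \<Rightarrow> ('e \<Rightarrow> 'a \<Rightarrow> 'e)
   \<Rightarrow> ('a \<Rightarrow> 't::ab_group_add \<Rightarrow> 't) \<Rightarrow> ('t \<Rightarrow> 'a \<Rightarrow> 't) \<Rightarrow> ('e \<Rightarrow> 'e \<Rightarrow> 't) \<Rightarrow> bool" where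
  "tensor_EE lE rE lT rT tens \<longleftrightarrow>
     is_tensor_product UNIV UNIV UNIV rE lE tens \<and> bimod lT rT \<and>
     (\<forall>a x y. lT a (tens x y) = tens (lE a x) y) \<and>
     (\<forall>a x y. rT (tens x y) a = tens x (rE y a))"

definition induced_wedge ::
  "('e \<Rightarrow> 'e \<Rightarrow> 't::ab_group_add) \<Rightarrow> ('e \<Rightarrow> 'e \<Rightarrow> 'w::ab_group_add) \<Rightarrow> ('t \<Rightarrow> 'w) \<Rightarrow> bool" where
  "induced_wedge tens wed wedT \<longleftrightarrow>
     (\<forall>s u. wedT (s + u) = wedT s + wedT u) \<and> (\<forall>x y. wedT (tens x y) = wed x y)"

text \<open>Condition (1): tz is Z(E) (x)_{Z(A)} A, and mu (the multiplication map) is bijective.\<close>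
definition cond1 ::
  "('a::ring_1 \<Rightarrow> 'e::ab_group_add \<Rightarrow> 'e) \<Rightarrow> ('e \<Rightarrow> 'a \<Rightarrow> 'e)
   \<Rightarrow> ('e \<Rightarrow> 'a \<Rightarrow> 'z::ab_group_add) \<Rightarrow> ('z \<Rightarrow> 'e) \<Rightarrow> bool" where
  "cond1 lE rE tz mu \<longleftrightarrow>
     is_tensor_product (centM lE rE) UNIV centA rE (\<lambda>r y. r * y) tz \<and>
     (\<forall>s u. mu (s + u) = mu s + mu u) \<and>
     (\<forall>w\<in>centM lE rE. \<forall>a. mu (tz w a) = rE w a) \<and> bij mu"

definition cond2 :: "('t::ab_group_add \<Rightarrow> 'a::ring_1 \<Rightarrow> 't) \<Rightarrow> ('t \<Rightarrow> 'w::ab_group_add) \<Rightarrow> 't set \<Rightarrow> bool" where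
  "cond2 rT wedT F \<longleftrightarrow>
     0 \<in> F \<and> (\<forall>f\<in>F. \<forall>f'\<in>F. f + f' \<in> F) \<and> (\<forall>f\<in>F. \<forall>a. rT f a \<in> F) \<and>
     {t. wedT t = 0} \<inter> F = {0} \<and>
     (\<forall>t. \<exists>k f. wedT k = 0 \<and> f \<in> F \<and> t = k + f) \<and>
     bij_betw wedT F UNIV"

definition Psym :: "('t::ab_group_add \<Rightarrow> 'w::zero) \<Rightarrow> 't set \<Rightarrow> 't \<Rightarrow> 't" where
  "Psym wedT F t = (THE k. wedT k = 0 \<and> t - k \<in> F)"

definition sigma :: "('t::ab_group_add \<Rightarrow> 'w::zero) \<Rightarrow> 't set \<Rightarrow> 't \<Rightarrow> 't" where
  "sigma wedT F t = Psym wedT F t + Psym wedT F t - t"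

definition Qinv :: "('t \<Rightarrow> 'w) \<Rightarrow> 't set \<Rightarrow> 'w \<Rightarrow> 't" where
  "Qinv wedT F w = (THE f. f \<in> F \<and> wedT f = w)"

definition cond3 ::
  "('a::ring_1 \<Rightarrow> 'e::ab_group_add \<Rightarrow> 'e) \<Rightarrow> ('e \<Rightarrow> 'a \<Rightarrow> 'e) \<Rightarrow> ('e \<Rightarrow> 'e \<Rightarrow> 't::ab_group_add)
   \<Rightarrow> ('t \<Rightarrow> 'w::zero) \<Rightarrow> 't set \<Rightarrow> bool" where
  "cond3 lE rE tens wedT F \<longleftrightarrow>
     (\<forall>w\<in>centM lE rE. \<forall>e\<in>centM lE rE. sigma wedT F (tens w e) = tens e w)"

definition pA :: "nat \<Rightarrow> (nat \<Rightarrow> nat \<Rightarrow> 'a::ring_1) \<Rightarrow> (nat \<Rightarrow> 'a) set" where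
  "pA n p = {xi. (\<forall>j\<ge>n. xi j = 0) \<and> (\<forall>i<n. (\<Sum>j<n. p i j * xi j) = xi i)}"

text \<open>p is an idempotent in M_n(A), Phi j = p(e_j), and xi |-> sum Phi_j xi_j is the
  identification p(A^n) = E.\<close>
definition proj_data ::
  "('e::ab_group_add \<Rightarrow> 'a::ring_1 \<Rightarrow> 'e) \<Rightarrow> nat \<Rightarrow> (nat \<Rightarrow> nat \<Rightarrow> 'a) \<Rightarrow> (nat \<Rightarrow> 'e) \<Rightarrow> bool" where
  "proj_data rE n p Phi \<longleftrightarrow>
     (\<forall>i<n. \<forall>j<n. (\<Sum>k<n. p i k * p k j) = p i j) \<and>
     (\<forall>j<n. Phi j = (\<Sum>k<n. rE (Phi k) (p k j))) \<and>
     bij_betw (\<lambda>xi. \<Sum>j<n. rE (Phi j) (xi j)) (pA n p) UNIV"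

definition coord ::
  "('e::ab_group_add \<Rightarrow> 'a::ring_1 \<Rightarrow> 'e) \<Rightarrow> nat \<Rightarrow> (nat \<Rightarrow> nat \<Rightarrow> 'a) \<Rightarrow> (nat \<Rightarrow> 'e) \<Rightarrow> 'e \<Rightarrow> nat \<Rightarrow> 'a" where
  "coord rE n p Phi e = (THE xi. xi \<in> pA n p \<and> (\<Sum>j<n. rE (Phi j) (xi j)) = e)"

definition nablaGr ::
  "('e::ab_group_add \<Rightarrow> 'a::ring_1 \<Rightarrow> 'e) \<Rightarrow> nat \<Rightarrow> (nat \<Rightarrow> nat \<Rightarrow> 'a) \<Rightarrow> (nat \<Rightarrow> 'e)
   \<Rightarrow> ('e \<Rightarrow> 'e \<Rightarrow> 't::ab_group_add) \<Rightarrow> ('a \<Rightarrow> 'e) \<Rightarrow> 'e \<Rightarrow> 't" where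
  "nablaGr rE n p Phi tens dA e = (\<Sum>j<n. tens (Phi j) (dA (coord rE n p Phi e j)))"

definition nabla0 ::
  "('e::ab_group_add \<Rightarrow> 'a::ring_1 \<Rightarrow> 'e) \<Rightarrow> nat \<Rightarrow> (nat \<Rightarrow> nat \<Rightarrow> 'a) \<Rightarrow> (nat \<Rightarrow> 'e)
   \<Rightarrow> ('e \<Rightarrow> 'e \<Rightarrow> 't::ab_group_add) \<Rightarrow> ('a \<Rightarrow> 'e) \<Rightarrow> ('e \<Rightarrow> 'w::ab_group_add)
   \<Rightarrow> ('t \<Rightarrow> 'w) \<Rightarrow> 't set \<Rightarrow> 'e \<Rightarrow> 't" where
  "nabla0 rE n p Phi tens dA dE wedT F e =
     nablaGr rE n p Phi tens dA e
     - Qinv wedT F (wedT (nablaGr rE n p Phi tens dA e) + dE e)"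

text \<open>g : E (x)_A E -> A is a bimodule map, g o sigma = g, and e |-> g(e (x) -) is a
  bijection from E onto Hom_A(E, A) (right A-linear maps).\<close>
definition metric ::
  "('a::ring_1 \<Rightarrow> 'e::ab_group_add \<Rightarrow> 'e) \<Rightarrow> ('e \<Rightarrow> 'a \<Rightarrow> 'e)
   \<Rightarrow> ('a \<Rightarrow> 't::ab_group_add \<Rightarrow> 't) \<Rightarrow> ('t \<Rightarrow> 'a \<Rightarrow> 't) \<Rightarrow> ('e \<Rightarrow> 'e \<Rightarrow> 't)
   \<Rightarrow> ('t \<Rightarrow> 'w::zero) \<Rightarrow> 't set \<Rightarrow> ('t \<Rightarrow> 'a) \<Rightarrow> bool" where
  "metric lE rE lT rT tens wedT F g \<longleftrightarrow>
     (\<forall>s u. g (s + u) = g s + g u) \<and>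
     (\<forall>a t. g (lT a t) = a * g t) \<and> (\<forall>a t. g (rT t a) = g t * a) \<and>
     (\<forall>t. g (sigma wedT F t) = g t) \<and>
     (\<forall>phi :: 'e \<Rightarrow> 'a. ((\<forall>x y. phi (x + y) = phi x + phi y) \<and> (\<forall>x a. phi (rE x a) = phi x * a))
         \<longrightarrow> (\<exists>!e. \<forall>x. g (tens e x) = phi x))"

text \<open>G_{alpha,beta}: the additive map on E (x)_A E with x (x) y |-> g(alpha (x) x) g(beta (x) y).\<close>
definition Gmap :: "('t::ab_group_add \<Rightarrow> 'a::ring_1) \<Rightarrow> ('e \<Rightarrow> 'e \<Rightarrow> 't) \<Rightarrow> 'e \<Rightarrow> 'e \<Rightarrow> 't \<Rightarrow> 'a" where
  "Gmap g tens al be =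
     (THE h. (\<forall>s u. h (s + u) = h s + h u) \<and>
             (\<forall>x y. h (tens x y) = g (tens al x) * g (tens be y)))"

definition psi ::
  "('e::ab_group_add \<Rightarrow> 'a::ring_1 \<Rightarrow> 'e) \<Rightarrow> nat \<Rightarrow> (nat \<Rightarrow> nat \<Rightarrow> 'a) \<Rightarrow> (nat \<Rightarrow> 'e)
   \<Rightarrow> ('e \<Rightarrow> 'e \<Rightarrow> 't::ab_group_add) \<Rightarrow> ('a \<Rightarrow> 'e) \<Rightarrow> ('e \<Rightarrow> 'w::ab_group_add)
   \<Rightarrow> ('t \<Rightarrow> 'w) \<Rightarrow> 't set \<Rightarrow> ('t \<Rightarrow> 'a) \<Rightarrow> 'e \<Rightarrow> 'e \<Rightarrow> 'e \<Rightarrow> 'a" where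
  "psi rE n p Phi tens dA dE wedT F g w th e =
     (let N0 = nabla0 rE n p Phi tens dA dE wedT F;
          om = (\<lambda>t. t - sigma wedT F t)
      in g (tens w (dA (g (tens e th)))) - g (tens e (dA (g (tens th w))))
         + g (tens th (dA (g (tens w e))))
         - Gmap g tens e th (om (N0 w)) + Gmap g tens w th (om (N0 e))
         - Gmap g tens e w (om (N0 th)))"

end

theory Submission
  imports Defs
begin


lemma zmult_0[simp]: "zmult 0 x = 0" by (simp add: zmult_def)

lemma zmult_succ: "zmult (k + 1) x = zmult k x + (x::'g::ab_group_add)"
proof (cases "k \<ge> 0")
  case True
  then have "nat (k+1) = Suc (nat k)" by simp
  then show ?thesis using True by (simp add: zmult_def add.commute)
next
  case False
  show ?thesis
  proof (cases "k = -1")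
    case True then show ?thesis by (simp add: zmult_def)
  next
    case F2: False
    with False have k1: "\<not> 0 \<le> k + 1" by simp
    have "nat (-k) = Suc (nat (-(k+1)))" using False F2 by simp
    then show ?thesis using False k1 by (simp add: zmult_def)
  qed
qed

lemma zmult_pred: "zmult (k - 1) x = zmult k x - (x::'g::ab_group_add)"
  using zmult_succ[of "k - 1" x] by simp

lemma zmult_add: "zmult (k + l) x = zmult k x + zmult l (x::'g::ab_group_add)"
proof (induct l rule: int_induct[where k=0])
  case base then show ?case by simp
next
  case (step1 i)
  have "zmult (k + (i + 1)) x = zmult (k + i) x + x" using zmult_succ[of "k+i" x] by (simp add: add.assoc)
  then show ?case using step1 zmult_succ[of i x] by simp
next
  case (step2 i)
  have "zmult (k + (i - 1)) x = zmult (k + i) x - x" using zmult_pred[of "k+i" x] by (simp add: algebra_simps)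
  then show ?case using step2 zmult_pred[of i x] by simp
qed

lemma zmult_neg: "zmult (- k) x = - zmult k (x::'g::ab_group_add)"
  using zmult_add[of k "-k" x] by (simp add: eq_neg_iff_add_eq_0 add.commute)

lemma zmult_hom:
  assumes "additive f"
  shows "f (zmult k x) = zmult k (f x)"
proof (induct k rule: int_induct[where k=0])
  case base then show ?case using additive.zero[OF assms] by simp
next
  case (step1 i) then show ?case using zmult_succ additive.add[OF assms] by metis
next
  case (step2 i) then show ?case using zmult_pred additive.diff[OF assms] by metis
qed

lemma zmult_zero_right[simp]: "zmult k (0::'g::ab_group_add) = 0"
  using zmult_hom[of "\<lambda>x::'g. 0"] by (simp add: additive_def)

lemma zmult_plus_right: "zmult k (x + y) = zmult k x + zmult k (y::'g::ab_group_add)"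
proof (induct k rule: int_induct[where k=0])
  case base then show ?case by simp
next
  case (step1 i) then show ?case using zmult_succ[of i "x+y"] zmult_succ[of i x] zmult_succ[of i y] by (simp add: algebra_simps)
next
  case (step2 i) show ?case unfolding zmult_pred step2(2) by (simp add: algebra_simps)
qed

lemma fsum_superset:
  assumes "finite S" "fsupp f \<subseteq> S"
  shows "fsum H f = (\<Sum>p\<in>S. zmult (f p) (H (fst p) (snd p)))"
  unfolding fsum_def
  by (rule sum.mono_neutral_left) (use assms in \<open>auto simp: fsupp_def\<close>)

lemma fsum_addf:
  assumes "finite (fsupp f)" "finite (fsupp h)"
  shows "fsum H (\<lambda>p. f p + h p) = fsum H f + fsum H h"
    and "finite (fsupp (\<lambda>p. f p + h p))"
proof -
  have sub: "fsupp (\<lambda>p. f p + h p) \<subseteq> fsupp f \<union> fsupp h" by (auto simp: fsupp_def)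
  let ?S = "fsupp f \<union> fsupp h"
  have fin: "finite ?S" using assms by simp
  show "finite (fsupp (\<lambda>p. f p + h p))" using sub fin finite_subset by blast
  have "fsum H (\<lambda>p. f p + h p) = (\<Sum>p\<in>?S. zmult (f p + h p) (H (fst p) (snd p)))"
    by (rule fsum_superset[OF fin sub])
  also have "\<dots> = (\<Sum>p\<in>?S. zmult (f p) (H (fst p) (snd p))) + (\<Sum>p\<in>?S. zmult (h p) (H (fst p) (snd p)))"
    by (simp add: zmult_add sum.distrib)
  also have "\<dots> = fsum H f + fsum H h"
    using fsum_superset[OF fin, of f H] fsum_superset[OF fin, of h H] by auto
  finally show "fsum H (\<lambda>p. f p + h p) = fsum H f + fsum H h" .
qed

lemma fsupp_negf: "fsupp (\<lambda>p. - f p) = fsupp f"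
  by (auto simp: fsupp_def)

lemma fsum_negf:
  "fsum H (\<lambda>p. - f p) = - fsum H f"
  by (auto simp: fsum_def fsupp_negf zmult_neg sum_negf)

lemma fsupp_delta[simp]: "fsupp (delta q) = {q}"
  by (auto simp: fsupp_def delta_def)

lemma fsum_delta: "fsum H (delta q) = H (fst q) (snd q)"
  unfolding fsum_def fsupp_delta by (simp add: delta_def zmult_def)

lemma fsum_diffs:
  assumes "finite (fsupp f)" "finite (fsupp h)"
  shows "fsum H (\<lambda>p. f p - h p) = fsum H f - fsum H h"
    and "finite (fsupp (\<lambda>p. f p - h p))"
  using fsum_addf(1)[OF assms(1), where h="\<lambda>p. - h p" and H=H] fsum_addf(2)[OF assms(1), where h="\<lambda>p. - h p"] fsum_negf[of H h] fsupp_negf[of h] assms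
  by (auto simp: fsupp_def)

lemma fsum_hom:
  assumes "additive \<phi>"
  shows "\<phi> (fsum H f) = fsum (\<lambda>x y. \<phi> (H x y)) f"
  unfolding fsum_def additive.sum[OF assms] zmult_hom[OF assms] by simp

lemma fsum_cong:
  assumes "\<And>p. p \<in> fsupp f \<Longrightarrow> H (fst p) (snd p) = H' (fst p) (snd p)"
  shows "fsum H f = fsum H' f"
  unfolding fsum_def using assms by (auto intro: sum.cong)

lemma rels_zero:
  assumes l1: "\<And>x x' y. H (x + x') y = H x y + H x' y"
    and l2: "\<And>x y y'. H x (y + y') = H x y + H x y'"
    and bl: "\<And>x r y. H (ra x r) y = H x (la r y)"
    and "f \<in> tensor_rels M N R ra la"
  shows "finite (fsupp f) \<and> fsum H f = 0"
  using assms(4)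
proof (induct rule: tensor_rels.induct)
  case zero then show ?case by (simp add: fsupp_def fsum_def)
next
  case (add f h) then show ?case using fsum_addf(1)[where f=f and h=h and H=H] fsum_addf(2)[where f=f and h=h] by simp
next
  case (neg f) then show ?case using fsum_negf[of H f] fsupp_negf[of f] by simp
next
  case (lin1 x x' y)
  have fd: "\<And>q. finite (fsupp (delta q))" by (simp add: fsum_delta)
  show ?case using fsum_diffs(1)[OF fsum_diffs(2)[OF fd fd] fd, of H] fsum_diffs(2)[OF fsum_diffs(2)[OF fd fd] fd] fsum_diffs(1)[OF fd fd, of H]
    by (simp add: fsum_delta l1)
next
  case (lin2 x y y')
  have fd: "\<And>q. finite (fsupp (delta q))" by (simp add: fsum_delta)
  show ?case using fsum_diffs(1)[OF fsum_diffs(2)[OF fd fd] fd, of H] fsum_diffs(2)[OF fsum_diffs(2)[OF fd fd] fd] fsum_diffs(1)[OF fd fd, of H]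
    by (simp add: fsum_delta l2)
next
  case (bal x r y)
  have fd: "\<And>q. finite (fsupp (delta q))" by (simp add: fsum_delta)
  show ?case using fsum_diffs(1)[OF fd fd, of H] fsum_diffs(2)[OF fd fd] by (simp add: fsum_delta bl)
qed

lemma tp_unique:
  assumes "is_tensor_product M N R ra la tens" "additive h1" "additive h2"
    and "\<And>x y. x \<in> M \<Longrightarrow> y \<in> N \<Longrightarrow> h1 (tens x y) = h2 (tens x y)"
  shows "h1 t = h2 t"
proof -
  obtain f where f: "finite (fsupp f)" "fsupp f \<subseteq> M \<times> N" "fsum tens f = t"
    using assms(1) unfolding is_tensor_product_def by blast
  have "h1 t = fsum (\<lambda>x y. h1 (tens x y)) f" using fsum_hom[OF assms(2), of tens f] f(3) by simp
  also have "\<dots> = fsum (\<lambda>x y. h2 (tens x y)) f"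
    by (rule fsum_cong) (use f(2) assms(4) in \<open>auto simp: mem_Times_iff\<close>)
  also have "\<dots> = h2 t" using fsum_hom[OF assms(3), of tens f] f(3) by simp
  finally show ?thesis .
qed

lemma tp_exists:
  assumes tp: "is_tensor_product UNIV UNIV UNIV ra la tens"
    and l1: "\<And>x x' y. H (x + x') y = H x y + H x' y"
    and l2: "\<And>x y y'. H x (y + y') = H x y + H x y'"
    and bl: "\<And>x r y. H (ra x r) y = H x (la r y)"
  shows "\<exists>h. additive h \<and> (\<forall>x y. h (tens x y) = H x y)"
proof -
  have surj: "\<And>t. \<exists>f. finite (fsupp f) \<and> fsum tens f = t"
    using tp unfolding is_tensor_product_def by blast
  have inj: "\<And>f. finite (fsupp f) \<Longrightarrow> fsum tens f = 0 \<Longrightarrow> f \<in> tensor_rels UNIV UNIV UNIV ra la"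
    using tp unfolding is_tensor_product_def by simp
  have wd: "fsum H f1 = fsum H f2"
    if "finite (fsupp f1)" "finite (fsupp f2)" "fsum tens f1 = fsum tens f2" for f1 f2
  proof -
    have "(\<lambda>p. f1 p - f2 p) \<in> tensor_rels UNIV UNIV UNIV ra la"
      using inj[of "\<lambda>p. f1 p - f2 p"] fsum_diffs(1)[OF that(1,2), of tens] fsum_diffs(2)[OF that(1,2)] that(3) by simp
    then have "fsum H (\<lambda>p. f1 p - f2 p) = 0" using rels_zero[of H ra la] l1 l2 bl by blast
    then show ?thesis using fsum_diffs(1)[OF that(1,2), of H] by simp
  qed
  define rep where "rep t = (SOME f. finite (fsupp f) \<and> fsum tens f = t)" for t
  have rep: "finite (fsupp (rep t)) \<and> fsum tens (rep t) = t" for t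
    unfolding rep_def by (rule someI_ex[of "\<lambda>f. finite (fsupp f) \<and> fsum tens f = t"]) (rule surj)
  define h where "h t = fsum H (rep t)" for t
  have "additive h"
  proof
    fix s u
    have fa: "finite (fsupp (\<lambda>p. rep s p + rep u p))" using fsum_addf(2) rep by blast
    have "fsum tens (\<lambda>p. rep s p + rep u p) = s + u" using fsum_addf(1)[of "rep s" "rep u" tens] rep by simp
    then have "h (s + u) = fsum H (\<lambda>p. rep s p + rep u p)"
      unfolding h_def using wd[OF conjunct1[OF rep[of "s+u"]] fa] rep by simp
    also have "\<dots> = h s + h u" unfolding h_def using fsum_addf(1) rep by blast
    finally show "h (s + u) = h s + h u" .
  qed
  moreover have "h (tens x y) = H x y" for x y
  proof -
    have fd: "finite (fsupp (delta (x, y)))" by (simp add: fsum_delta)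
    have "h (tens x y) = fsum H (delta (x, y))" unfolding h_def
      using wd[OF conjunct1[OF rep] fd] rep fsum_delta(1)[of tens "(x,y)"] by simp
    then show ?thesis by (simp add: fsum_delta)
  qed
  ultimately show ?thesis by blast
qed



locale L =
  fixes ofC :: "complex \<Rightarrow> 'a::ring_1"
    and lE :: "'a \<Rightarrow> 'e::ab_group_add \<Rightarrow> 'e" and rE :: "'e \<Rightarrow> 'a \<Rightarrow> 'e"
    and lW :: "'a \<Rightarrow> 'w::ab_group_add \<Rightarrow> 'w" and rW :: "'w \<Rightarrow> 'a \<Rightarrow> 'w"
    and dA :: "'a \<Rightarrow> 'e" and dE :: "'e \<Rightarrow> 'w" and wed :: "'e \<Rightarrow> 'e \<Rightarrow> 'w"
    and lT :: "'a \<Rightarrow> 't::ab_group_add \<Rightarrow> 't" and rT :: "'t \<Rightarrow> 'a \<Rightarrow> 't"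
    and tens :: "'e \<Rightarrow> 'e \<Rightarrow> 't" and wedT :: "'t \<Rightarrow> 'w"
    and tz :: "'e \<Rightarrow> 'a \<Rightarrow> 'z::ab_group_add" and mu :: "'z \<Rightarrow> 'e"
    and F :: "'t set"
    and n :: nat and p :: "nat \<Rightarrow> nat \<Rightarrow> 'a" and Phi :: "nat \<Rightarrow> 'e"
    and g :: "'t \<Rightarrow> 'a"
  assumes dc: "diff_calc ofC lE rE lW rW dA dE wed"
    and te: "tensor_EE lE rE lT rT tens"
    and iw: "induced_wedge tens wed wedT"
    and c1: "cond1 lE rE tz mu"
    and c2: "cond2 rT wedT F"
    and c3: "cond3 lE rE tens wedT F"
    and pd: "proj_data rE n p Phi"
    and mt: "metric lE rE lT rT tens wedT F g"
begin

lemma bE: "bimod lE rE" using dc by (simp add: diff_calc_def)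
lemma bW: "bimod lW rW" using dc by (simp add: diff_calc_def)
lemma bT: "bimod lT rT" using te by (simp add: tensor_EE_def)
lemma tp: "is_tensor_product UNIV UNIV UNIV rE lE tens" using te by (simp add: tensor_EE_def)

lemma rE_add1: "rE (x + y) a = rE x a + rE y a" using bE by (simp add: bimod_def)
lemma rE_add2: "rE x (a + b) = rE x a + rE x b" using bE by (simp add: bimod_def)
lemma rE_mult: "rE x (a * b) = rE (rE x a) b" using bE by (simp add: bimod_def)
lemma lE_rE: "lE a (rE x b) = rE (lE a x) b" using bE by (simp add: bimod_def)
lemma rW_add1: "rW (x + y) a = rW x a + rW y a" using bW by (simp add: bimod_def)
lemma rT_add1: "rT (x + y) a = rT x a + rT y a" using bT by (simp add: bimod_def)
lemma rT_add2: "rT x (a + b) = rT x a + rT x b" using bT by (simp add: bimod_def)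
lemma rT_one: "rT x 1 = x" using bT by (simp add: bimod_def)

lemma add_rE: "additive (\<lambda>x. rE x a)" by (simp add: additive_def rE_add1)
lemma add_rW: "additive (\<lambda>x. rW x a)" by (simp add: additive_def rW_add1)
lemma add_rT: "additive (\<lambda>x. rT x a)" by (simp add: additive_def rT_add1)
lemma add_rT2: "additive (\<lambda>a. rT x a)" by (simp add: additive_def rT_add2)

lemma tens_add1: "tens (x + x') y = tens x y + tens x' y" using tp by (simp add: is_tensor_product_def)
lemma tens_add2: "tens x (y + y') = tens x y + tens x y'" using tp by (simp add: is_tensor_product_def)
lemma tens_bal: "tens (rE x a) y = tens x (lE a y)" using tp by (simp add: is_tensor_product_def)
lemma lT_tens: "lT a (tens x y) = tens (lE a x) y" using te by (simp add: tensor_EE_def)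
lemma rT_tens: "rT (tens x y) a = tens x (rE y a)" using te by (simp add: tensor_EE_def)
lemma add_tens1: "additive (\<lambda>x. tens x y)" by (simp add: additive_def tens_add1)
lemma add_tens2: "additive (\<lambda>y. tens x y)" by (simp add: additive_def tens_add2)

lemma wedT_add: "wedT (s + u) = wedT s + wedT u" using iw by (simp add: induced_wedge_def)
lemma wedT_tens: "wedT (tens x y) = wed x y" using iw by (simp add: induced_wedge_def)
lemma add_wedT: "additive wedT" by (simp add: additive_def wedT_add)

lemma g_add: "g (s + u) = g s + g u" using mt by (simp add: metric_def)
lemma g_lT: "g (lT a t) = a * g t" using mt by (simp add: metric_def)
lemma g_rT: "g (rT t a) = g t * a" using mt by (simp add: metric_def)
lemma g_sigma: "g (sigma wedT F t) = g t" using mt by (simp add: metric_def)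
lemma add_g: "additive g" by (simp add: additive_def g_add)

lemma dA_mult: "dA (a * b) = rE (dA a) b + lE a (dA b)" using dc by (simp add: diff_calc_def)
lemma dE_rE: "dE (rE x a) = rW (dE x) a - wed x (dA a)" using dc by (simp add: diff_calc_def)
lemma wed_rE: "rW (wed x y) a = wed x (rE y a)" using dc by (simp add: diff_calc_def)

lemma cent: "x \<in> centM lE rE \<Longrightarrow> lE a x = rE x a" by (simp add: centM_def)
lemma centA_comm: "a \<in> centA \<Longrightarrow> a * b = b * a" by (simp add: centA_def)

lemma cent_rE:
  assumes "x \<in> centM lE rE" "a' \<in> centA"
  shows "rE x a' \<in> centM lE rE"
  unfolding centM_def
proof (intro CollectI allI)
  fix a
  have "lE a (rE x a') = rE (rE x a) a'" using lE_rE cent[OF assms(1)] by simp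
  also have "\<dots> = rE x (a * a')" by (simp add: rE_mult)
  also have "\<dots> = rE x (a' * a)" using centA_comm[OF assms(2)] by simp
  also have "\<dots> = rE (rE x a') a" by (simp add: rE_mult)
  finally show "lE a (rE x a') = rE (rE x a') a" .
qed

lemma K1: "x \<in> centM lE rE \<Longrightarrow> g (tens (rE x a) y) = a * g (tens x y)"
  using cent[of x a] lT_tens[of a x y] g_lT by metis
lemma K2: "g (tens x (rE y a)) = g (tens x y) * a"
  using rT_tens g_rT by metis
lemma K3: "x \<in> centM lE rE \<Longrightarrow> g (tens x (lE a y)) = a * g (tens x y)"
  using K1 tens_bal by metis

lemma K4:
  assumes "x \<in> centM lE rE" "y \<in> centM lE rE"
  shows "g (tens x y) \<in> centA"
  unfolding centA_def
proof (intro CollectI allI)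
  fix b
  have "b * g (tens x y) = g (tens x (lE b y))" using K3[OF assms(1)] by simp
  also have "\<dots> = g (tens x y) * b" using cent[OF assms(2)] K2 by simp
  finally show "g (tens x y) * b = b * g (tens x y)" by simp
qed


end

context L begin
lemma tens_unique: "additive h1 \<Longrightarrow> additive h2 \<Longrightarrow> (\<And>x y. h1 (tens x y) = h2 (tens x y)) \<Longrightarrow> h1 t = h2 t"
  by (rule tp_unique[OF tp]) auto

lemma Gmap_char:
  assumes "be \<in> centM lE rE"
  shows "additive (Gmap g tens al be) \<and> (\<forall>x y. Gmap g tens al be (tens x y) = g (tens al x) * g (tens be y))"
proof -
  have "\<exists>h. additive h \<and> (\<forall>x y. h (tens x y) = g (tens al x) * g (tens be y))"
  proof (rule tp_exists[OF tp])
    show "g (tens al (x + x')) * g (tens be y) = g (tens al x) * g (tens be y) + g (tens al x') * g (tens be y)" for x x' y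
      by (simp add: tens_add2 g_add algebra_simps)
    show "g (tens al x) * g (tens be (y + y')) = g (tens al x) * g (tens be y) + g (tens al x) * g (tens be y')" for x y y'
      by (simp add: tens_add2 g_add algebra_simps)
    show "g (tens al (rE x r)) * g (tens be y) = g (tens al x) * g (tens be (lE r y))" for x r y
      by (simp add: K2 K3[OF assms] mult.assoc)
  qed
  then obtain h where h: "additive h" "\<forall>x y. h (tens x y) = g (tens al x) * g (tens be y)" by blast
  have "Gmap g tens al be = h"
    unfolding Gmap_def
  proof (rule the_equality)
    show "(\<forall>s u. h (s + u) = h s + h u) \<and> (\<forall>x y. h (tens x y) = g (tens al x) * g (tens be y))"
      using h by (simp add: additive_def)
    fix h' assume "(\<forall>s u. h' (s + u) = h' s + h' u) \<and> (\<forall>x y. h' (tens x y) = g (tens al x) * g (tens be y))"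
    then have h': "additive h'" "\<forall>x y. h' (tens x y) = g (tens al x) * g (tens be y)"
      by (auto simp: additive_def)
    show "h' = h"
    proof
      fix t show "h' t = h t" by (rule tens_unique[OF h'(1) h(1)]) (simp add: h'(2) h(2))
    qed
  qed
  then show ?thesis using h by simp
qed

lemma Gmap_add: "be \<in> centM lE rE \<Longrightarrow> additive (Gmap g tens al be)"
  using Gmap_char by blast
lemma Gmap_tens: "be \<in> centM lE rE \<Longrightarrow> Gmap g tens al be (tens x y) = g (tens al x) * g (tens be y)"
  using Gmap_char by blast

lemma Gmap_rT:
  assumes "be \<in> centM lE rE"
  shows "Gmap g tens al be (rT t a) = Gmap g tens al be t * a"
proof (rule tens_unique)
  show "additive (\<lambda>t. Gmap g tens al be (rT t a))"
    using Gmap_add[OF assms] by (simp add: additive_def rT_add1)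
  show "additive (\<lambda>t. Gmap g tens al be t * a)"
    using Gmap_add[OF assms] by (simp add: additive_def algebra_simps)
  show "Gmap g tens al be (rT (tens x y) a) = Gmap g tens al be (tens x y) * a" for x y
    by (simp add: rT_tens Gmap_tens[OF assms] K2 mult.assoc)
qed

lemma Gmap_scal:
  assumes "be \<in> centM lE rE" "al \<in> centM lE rE"
  shows "Gmap g tens (rE al a) be t = a * Gmap g tens al be t"
proof (rule tens_unique)
  show "additive (Gmap g tens (rE al a) be)" using Gmap_add[OF assms(1)] .
  show "additive (\<lambda>t. a * Gmap g tens al be t)"
    using Gmap_add[OF assms(1)] by (simp add: additive_def algebra_simps)
  show "Gmap g tens (rE al a) be (tens x y) = a * Gmap g tens al be (tens x y)" for x y
    by (simp add: Gmap_tens[OF assms(1)] K1[OF assms(2)] mult.assoc)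
qed

end

context L begin
lemma c2u: "0 \<in> F \<and> (\<forall>f\<in>F. \<forall>f'\<in>F. f + f' \<in> F) \<and> (\<forall>f\<in>F. \<forall>a. rT f a \<in> F) \<and>
     {t. wedT t = 0} \<inter> F = {0} \<and>
     (\<forall>t. \<exists>k f. wedT k = 0 \<and> f \<in> F \<and> t = k + f) \<and>
     bij_betw wedT F UNIV" using c2 unfolding cond2_def .

lemma F_props: "0 \<in> F" "f \<in> F \<Longrightarrow> f' \<in> F \<Longrightarrow> f + f' \<in> F" "f \<in> F \<Longrightarrow> rT f a \<in> F"
  "wedT t = 0 \<Longrightarrow> t \<in> F \<Longrightarrow> t = 0" "\<exists>k f. wedT k = 0 \<and> f \<in> F \<and> t = k + f"
  "bij_betw wedT F UNIV"
proof -
  show "0 \<in> F" using c2u by simp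
  show "f \<in> F \<Longrightarrow> f' \<in> F \<Longrightarrow> f + f' \<in> F" using c2u by simp
  show "f \<in> F \<Longrightarrow> rT f a \<in> F" using c2u by simp
  show "wedT t = 0 \<Longrightarrow> t \<in> F \<Longrightarrow> t = 0"
  proof -
    assume "wedT t = 0" "t \<in> F"
    then have "t \<in> {t. wedT t = 0} \<inter> F" by simp
    then show "t = 0" using c2u by simp
  qed
  show "\<exists>k f. wedT k = 0 \<and> f \<in> F \<and> t = k + f" using c2u by simp
  show "bij_betw wedT F UNIV" using c2u by simp
qed

lemma rT_m1: "rT x (-1) = - x"
  using additive.minus[OF add_rT2, of x 1] rT_one by simp

lemma F_diff: "f \<in> F \<Longrightarrow> f' \<in> F \<Longrightarrow> f - f' \<in> F"
  using F_props(2)[of f "rT f' (-1)"] F_props(3)[of f' "-1"] rT_m1 by simp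

lemma wedT_rT: "wedT (rT t a) = rW (wedT t) a"
proof (rule tens_unique[of "\<lambda>t. wedT (rT t a)" "\<lambda>t. rW (wedT t) a"])
  show "additive (\<lambda>t. wedT (rT t a))" by (simp add: additive_def rT_add1 wedT_add)
  show "additive (\<lambda>t. rW (wedT t) a)" by (simp add: additive_def rW_add1 wedT_add)
  show "wedT (rT (tens x y) a) = rW (wedT (tens x y)) a" for x y
    by (simp add: rT_tens wedT_tens wed_rE)
qed

lemma Psym_unique: "wedT k = 0 \<Longrightarrow> t - k \<in> F \<Longrightarrow> Psym wedT F t = k"
  unfolding Psym_def
proof (rule the_equality)
  fix k' assume a: "wedT k = 0" "t - k \<in> F" and b: "wedT k' = 0 \<and> t - k' \<in> F"
  have "(t - k) - (t - k') \<in> F" using F_diff a b by blast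
  moreover have "wedT ((t - k) - (t - k')) = 0"
    using additive.diff[OF add_wedT] a b by simp
  ultimately have "(t - k) - (t - k') = 0" using F_props(4) by blast
  then show "k' = k" by simp
qed auto

lemma Psym_char: "wedT (Psym wedT F t) = 0 \<and> t - Psym wedT F t \<in> F"
proof -
  obtain k f where "wedT k = 0" "f \<in> F" "t = k + f" using F_props(5) by blast
  then have "Psym wedT F t = k" using Psym_unique[of k t] by simp
  then show ?thesis using \<open>wedT k = 0\<close> \<open>f \<in> F\<close> \<open>t = k + f\<close> by simp
qed

lemma Psym_add: "Psym wedT F (s + u) = Psym wedT F s + Psym wedT F u"
proof (rule Psym_unique)
  show "wedT (Psym wedT F s + Psym wedT F u) = 0" using Psym_char wedT_add by simp
  have "s + u - (Psym wedT F s + Psym wedT F u) = (s - Psym wedT F s) + (u - Psym wedT F u)" by simp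
  then show "s + u - (Psym wedT F s + Psym wedT F u) \<in> F" using Psym_char F_props(2) by metis
qed

lemma Psym_rT: "Psym wedT F (rT t a) = rT (Psym wedT F t) a"
proof (rule Psym_unique)
  show "wedT (rT (Psym wedT F t) a) = 0" using Psym_char wedT_rT additive.zero[OF add_rW] by simp
  have "rT t a - rT (Psym wedT F t) a = rT (t - Psym wedT F t) a" using additive.diff[OF add_rT] by metis
  then show "rT t a - rT (Psym wedT F t) a \<in> F" using Psym_char F_props(3) by metis
qed

lemma sigma_add: "additive (sigma wedT F)"
  by (simp add: additive_def sigma_def Psym_add algebra_simps)

lemma sigma_rT: "sigma wedT F (rT t a) = rT (sigma wedT F t) a"
proof -
  have "rT (Psym wedT F t + Psym wedT F t - t) a = rT (Psym wedT F t) a + rT (Psym wedT F t) a - rT t a"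
    using additive.diff[OF add_rT] rT_add1 by simp
  then show ?thesis unfolding sigma_def Psym_rT by simp
qed

lemma Qinv_unique: "f \<in> F \<Longrightarrow> wedT f = X \<Longrightarrow> Qinv wedT F X = f"
  unfolding Qinv_def
proof (rule the_equality)
  fix f' assume "f \<in> F" "wedT f = X" "f' \<in> F \<and> wedT f' = X"
  moreover have "inj_on wedT F" using F_props(6) unfolding bij_betw_def by blast
  ultimately show "f' = f" unfolding inj_on_def by auto
qed auto

lemma Qinv_char: "Qinv wedT F X \<in> F \<and> wedT (Qinv wedT F X) = X"
proof -
  have "X \<in> wedT ` F" using F_props(6) unfolding bij_betw_def by simp
  then obtain f where "f \<in> F" "wedT f = X" by blast
  then show ?thesis using Qinv_unique by simp
qed

lemma Qinv_rW: "Qinv wedT F (rW X a) = rT (Qinv wedT F X) a"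
  using Qinv_unique[of "rT (Qinv wedT F X) a" "rW X a"] Qinv_char F_props(3) wedT_rT by simp

end

context L begin

lemma pd_bij: "bij_betw (\<lambda>xi. \<Sum>j<n. rE (Phi j) (xi j)) (pA n p) UNIV"
  using conjunct2[OF conjunct2[OF pd[unfolded proj_data_def]]] .

lemma coord_unique:
  assumes "xi \<in> pA n p" "(\<Sum>j<n. rE (Phi j) (xi j)) = e"
  shows "coord rE n p Phi e = xi"
  unfolding coord_def
proof (rule the_equality)
  show "xi \<in> pA n p \<and> (\<Sum>j<n. rE (Phi j) (xi j)) = e" using assms by simp
  fix xi' assume "xi' \<in> pA n p \<and> (\<Sum>j<n. rE (Phi j) (xi' j)) = e"
  then show "xi' = xi" using assms pd_bij unfolding bij_betw_def inj_on_def by auto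
qed

lemma coord_char: "coord rE n p Phi e \<in> pA n p \<and> (\<Sum>j<n. rE (Phi j) (coord rE n p Phi e j)) = e"
proof -
  have "e \<in> (\<lambda>xi. \<Sum>j<n. rE (Phi j) (xi j)) ` pA n p" using pd_bij unfolding bij_betw_def by simp
  then obtain xi where "xi \<in> pA n p" "(\<Sum>j<n. rE (Phi j) (xi j)) = e" by blast
  then show ?thesis using coord_unique by simp
qed

lemma coord_rE: "coord rE n p Phi (rE e a) = (\<lambda>j. coord rE n p Phi e j * a)"
proof (rule coord_unique)
  let ?c = "coord rE n p Phi e"
  have c: "?c \<in> pA n p" "(\<Sum>j<n. rE (Phi j) (?c j)) = e" using coord_char by auto
  show "(\<lambda>j. ?c j * a) \<in> pA n p"
    using c(1) unfolding pA_def
    by (auto simp: sum_distrib_right[symmetric] mult.assoc[symmetric])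
  have "(\<Sum>j<n. rE (Phi j) (?c j * a)) = (\<Sum>j<n. rE (rE (Phi j) (?c j)) a)" by (simp add: rE_mult)
  also have "\<dots> = rE (\<Sum>j<n. rE (Phi j) (?c j)) a" using additive.sum[OF add_rE] by metis
  finally show "(\<Sum>j<n. rE (Phi j) (?c j * a)) = rE e a" using c(2) by simp
qed

lemma nablaGr_rE:
  "nablaGr rE n p Phi tens dA (rE e a) = rT (nablaGr rE n p Phi tens dA e) a + tens e (dA a)"
proof -
  let ?c = "coord rE n p Phi e"
  have "nablaGr rE n p Phi tens dA (rE e a) = (\<Sum>j<n. tens (Phi j) (dA (?c j * a)))"
    unfolding nablaGr_def coord_rE ..
  also have "\<dots> = (\<Sum>j<n. rT (tens (Phi j) (dA (?c j))) a + tens (rE (Phi j) (?c j)) (dA a))"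
    by (simp add: dA_mult tens_add2 rT_tens tens_bal)
  also have "\<dots> = (\<Sum>j<n. rT (tens (Phi j) (dA (?c j))) a) + (\<Sum>j<n. tens (rE (Phi j) (?c j)) (dA a))"
    by (simp add: sum.distrib)
  also have "(\<Sum>j<n. rT (tens (Phi j) (dA (?c j))) a) = rT (nablaGr rE n p Phi tens dA e) a"
    unfolding nablaGr_def using additive.sum[OF add_rT] by metis
  also have "(\<Sum>j<n. tens (rE (Phi j) (?c j)) (dA a)) = tens e (dA a)"
    using additive.sum[OF add_tens1, of "\<lambda>j. rE (Phi j) (?c j)" "{..<n}" "dA a"] coord_char by simp
  finally show ?thesis .
qed

lemma nabla0_rE:
  "nabla0 rE n p Phi tens dA dE wedT F (rE e a) = rT (nabla0 rE n p Phi tens dA dE wedT F e) a + tens e (dA a)"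
proof -
  let ?NG = "nablaGr rE n p Phi tens dA e"
  let ?X = "wedT ?NG + dE e"
  have "wedT (nablaGr rE n p Phi tens dA (rE e a)) + dE (rE e a) = rW ?X a"
    by (simp add: nablaGr_rE wedT_add wedT_rT wedT_tens dE_rE rW_add1)
  then have "nabla0 rE n p Phi tens dA dE wedT F (rE e a) = rT ?NG a + tens e (dA a) - rT (Qinv wedT F ?X) a"
    unfolding nabla0_def by (simp add: nablaGr_rE Qinv_rW)
  also have "\<dots> = rT (?NG - Qinv wedT F ?X) a + tens e (dA a)"
    using additive.diff[OF add_rT[of a], of ?NG "Qinv wedT F ?X"] by simp
  finally show ?thesis unfolding nabla0_def .
qed

lemma c1u: "is_tensor_product (centM lE rE) UNIV centA rE (\<lambda>r y. r * y) tz \<and>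
     (\<forall>s u. mu (s + u) = mu s + mu u) \<and>
     (\<forall>w\<in>centM lE rE. \<forall>a. mu (tz w a) = rE w a) \<and> bij mu"
  using c1 unfolding cond1_def .

lemma sigma_cent: "x \<in> centM lE rE \<Longrightarrow> y \<in> centM lE rE \<Longrightarrow> sigma wedT F (tens x y) = tens y x"
  using c3 unfolding cond3_def by blast

lemma sigma_swap:
  assumes e: "e \<in> centM lE rE"
  shows "sigma wedT F (tens e y) = tens y e"
proof -
  have tp1: "is_tensor_product (centM lE rE) UNIV centA rE (\<lambda>r y. r * y) tz" using c1u by blast
  have muadd: "additive mu" using c1u by (simp add: additive_def)
  have "surj mu" using c1u bij_is_surj by blast
  then obtain z where z: "y = mu z" by blast
  have "sigma wedT F (tens e (mu z)) = tens (mu z) e"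
  proof (rule tp_unique[OF tp1, of "\<lambda>z. sigma wedT F (tens e (mu z))" "\<lambda>z. tens (mu z) e"])
    show "additive (\<lambda>z. sigma wedT F (tens e (mu z)))"
      using additive.add[OF sigma_add] additive.add[OF muadd] by (simp add: additive_def tens_add2)
    show "additive (\<lambda>z. tens (mu z) e)"
      using additive.add[OF muadd] by (simp add: additive_def tens_add1)
    fix om b assume om: "om \<in> centM lE rE" and "b \<in> (UNIV::'a set)"
    have m: "mu (tz om b) = rE om b" using c1u om by blast
    have "sigma wedT F (tens e (rE om b)) = sigma wedT F (rT (tens e om) b)" by (simp add: rT_tens)
    also have "\<dots> = rT (tens om e) b" by (simp add: sigma_rT sigma_cent[OF e om])
    also have "\<dots> = tens (rE om b) e" by (simp add: rT_tens tens_bal cent[OF e])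
    finally show "sigma wedT F (tens e (mu (tz om b))) = tens (mu (tz om b)) e" using m by simp
  qed
  then show ?thesis using z by simp
qed

end

context L begin

lemma om_rT: "(\<lambda>t. t - sigma wedT F t) (rT t a) = rT ((\<lambda>t. t - sigma wedT F t) t) a"
  using additive.diff[OF add_rT[of a]] sigma_rT by simp

lemma main:
  assumes w: "w \<in> centM lE rE" and th: "th \<in> centM lE rE" and e: "e \<in> centM lE rE"
    and a: "a' \<in> centA"
  shows "psi rE n p Phi tens dA dE wedT F g w th (rE e a')
         = psi rE n p Phi tens dA dE wedT F g w th e * a'
           + 2 * g (tens w e) * g (tens th (dA a'))"
proof -
  let ?N0 = "nabla0 rE n p Phi tens dA dE wedT F"
  let ?om = "\<lambda>t. t - sigma wedT F t"
  let ?e' = "rE e a'"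
  let ?c1 = "g (tens e th)" and ?c3 = "g (tens w e)"
  let ?Y = "g (tens w (dA a'))" and ?Z = "g (tens th (dA a'))"
  have S1: "g (tens w (dA (g (tens ?e' th)))) = g (tens w (dA ?c1)) * a' + ?c1 * ?Y"
  proof -
    have "g (tens ?e' th) = ?c1 * a'" using K1[OF e] centA_comm[OF a] by simp
    then show ?thesis by (simp add: dA_mult tens_add2 g_add K2 K3[OF w])
  qed
  have S2: "g (tens ?e' (dA (g (tens th w)))) = g (tens e (dA (g (tens th w)))) * a'"
    using K1[OF e] centA_comm[OF a] by simp
  have S3: "g (tens th (dA (g (tens w ?e')))) = g (tens th (dA ?c3)) * a' + ?c3 * ?Z"
    by (simp add: K2 dA_mult tens_add2 g_add K3[OF th])
  have S4: "Gmap g tens ?e' th T = Gmap g tens e th T * a'" for T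
    using Gmap_scal[OF th e] centA_comm[OF a] by simp
  have S6: "Gmap g tens ?e' w T = Gmap g tens e w T * a'" for T
    using Gmap_scal[OF w e] centA_comm[OF a] by simp
  have S5: "Gmap g tens w th (?om (?N0 ?e')) = Gmap g tens w th (?om (?N0 e)) * a' + ?c3 * ?Z - ?Y * g (tens th e)"
  proof -
    have "?om (?N0 ?e') = rT (?om (?N0 e)) a' + (tens e (dA a') - tens (dA a') e)"
      unfolding nabla0_rE using additive.add[OF sigma_add] additive.diff[OF add_rT[of a']] sigma_rT
        sigma_swap[OF e] by (simp add: algebra_simps)
    then show ?thesis
      using additive.add[OF Gmap_add[OF th]] additive.diff[OF Gmap_add[OF th]]
      by (simp add: Gmap_rT[OF th] Gmap_tens[OF th])
  qed
  have sym: "g (tens th e) = ?c1" using g_sigma[of "tens e th"] sigma_cent[OF e th] by simp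
  have comm: "?Y * ?c1 = ?c1 * ?Y" using K4[OF e th] centA_comm by metis
  show ?thesis
    unfolding psi_def Let_def S1 S2 S3 S4 S5 S6 sym comm
    by (simp add: algebra_simps mult_2)
qed

end

theorem lemma6p11:
  fixes ofC :: "complex \<Rightarrow> 'a::ring_1"
    and lE :: "'a \<Rightarrow> 'e::ab_group_add \<Rightarrow> 'e" and rE :: "'e \<Rightarrow> 'a \<Rightarrow> 'e"
    and lW :: "'a \<Rightarrow> 'w::ab_group_add \<Rightarrow> 'w" and rW :: "'w \<Rightarrow> 'a \<Rightarrow> 'w"
    and dA :: "'a \<Rightarrow> 'e" and dE :: "'e \<Rightarrow> 'w" and wed :: "'e \<Rightarrow> 'e \<Rightarrow> 'w"
    and lT :: "'a \<Rightarrow> 't::ab_group_add \<Rightarrow> 't" and rT :: "'t \<Rightarrow> 'a \<Rightarrow> 't"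
    and tens :: "'e \<Rightarrow> 'e \<Rightarrow> 't" and wedT :: "'t \<Rightarrow> 'w"
    and tz :: "'e \<Rightarrow> 'a \<Rightarrow> 'z::ab_group_add" and mu :: "'z \<Rightarrow> 'e"
    and F :: "'t set"
    and n :: nat and p :: "nat \<Rightarrow> nat \<Rightarrow> 'a" and Phi :: "nat \<Rightarrow> 'e"
    and g :: "'t \<Rightarrow> 'a"
    and w th e :: 'e and a' :: 'a
  assumes "diff_calc ofC lE rE lW rW dA dE wed"
    and "tensor_EE lE rE lT rT tens"
    and "induced_wedge tens wed wedT"
    and "cond1 lE rE tz mu"
    and "cond2 rT wedT F"
    and "cond3 lE rE tens wedT F"
    and "proj_data rE n p Phi"
    and "metric lE rE lT rT tens wedT F g"
    and "w \<in> centM lE rE" and "th \<in> centM lE rE" and "e \<in> centM lE rE"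
    and "a' \<in> centA"
  shows "psi rE n p Phi tens dA dE wedT F g w th (rE e a')
         = psi rE n p Phi tens dA dE wedT F g w th e * a'
           + 2 * g (tens w e) * g (tens th (dA a'))"
proof -
  interpret L ofC lE rE lW rW dA dE wed lT rT tens wedT tz mu F n p Phi g
    using assms(1-8) by unfold_locales
  show ?thesis using main assms(9-12) by blast
qed


end
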